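(* Let $u_0$ be as in the context and put $K_0:=\sup_{X} y^2e^{-2u_0}|P(z)|^2<\infty$. Then $w_+:=u_0+y$ is a (classical, hence weak) super-solution of $( * )$ on $X$. Moreover, for every constant $C\ge \max\{1,K_0\}$, the continuous function $w_-:=u_0+f_C(y)$ is a weak sub-solution of $( * )$ on $X$, and $u_0\le w_-\le w_+$ on $X$.
   Context: Let $X=\mathbb{R}^2\times(0,+\infty)$ with coordinates $(x_1,x_2,y)$, $z=x_1+ix_2$, $R=\sqrt{|z|^2+y^2}$, and $\Delta=\partial_1^2+\partial_2^2+\partial_y^2$. Let $P(z)$ be a non-zero complex polynomial of degree $N$. Consider the equation $( * )$: $\Delta u+e^{-2u}|P(z)|^2=0$ on $X$. A continuous function $u$ on $X$ is a weak sub-solution (resp. super-solution) of $( * )$ if $\int_X\big(-u\Delta v-e^{-2u}|P|^2v\big)\le 0$ (resp. $\ge 0$) for every non-negative compactly supported smooth $v$ on $X$. Let $u_0$ be a smooth solution of $( * )$ on $X$ (the He–Mazzeo model solution satisfying the generalized Nahm pole boundary condition) with the properties: $\sup_X y\,e^{-u_0}|P(z)|<\infty$, and there are $R_0,K>0$ with $|u_0-N\ln R-\ln y|\le K$ whenever $R\ge R_0$. For $C\ge 1$ define $f_C(y)=0$ for $0<y\le C$ and $f_C(y)=y-C\ln(y/C)-C$ for $y\ge C$. *)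

theory Defs
  imports "HOL-Analysis.Analysis" "HOL-Computational_Algebra.Polynomial"
begin

text \<open>Points of R^3 are triples (x1, x2, y) :: real \<times> real \<times> real.\<close>

definition ycoord :: "real \<times> real \<times> real \<Rightarrow> real" where
  "ycoord p = snd (snd p)"

definition zcoord :: "real \<times> real \<times> real \<Rightarrow> complex" where
  "zcoord p = Complex (fst p) (fst (snd p))"

definition Rad :: "real \<times> real \<times> real \<Rightarrow> real" where
  "Rad p = sqrt ((fst p)\<^sup>2 + (fst (snd p))\<^sup>2 + (snd (snd p))\<^sup>2)"

definition Xspace :: "(real \<times> real \<times> real) set" where
  "Xspace = {p. ycoord p > 0}"

definition pderiv_dir :: "(real \<times> real \<times> real) \<Rightarrow> (real \<times> real \<times> real \<Rightarrow> real)
    \<Rightarrow> real \<times> real \<times> real \<Rightarrow> real" where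
  "pderiv_dir i f x = deriv (\<lambda>t. f (x + t *\<^sub>R i)) 0"

fun Ck_on :: "nat \<Rightarrow> (real \<times> real \<times> real) set \<Rightarrow> (real \<times> real \<times> real \<Rightarrow> real) \<Rightarrow> bool" where
  "Ck_on 0 S f = continuous_on S f"
| "Ck_on (Suc k) S f = (continuous_on S f \<and> (\<forall>x\<in>S. f differentiable (at x)) \<and>
      (\<forall>i\<in>Basis. Ck_on k S (pderiv_dir i f)))"

definition smooth_on :: "(real \<times> real \<times> real) set \<Rightarrow> (real \<times> real \<times> real \<Rightarrow> real) \<Rightarrow> bool" where
  "smooth_on S f = (\<forall>k. Ck_on k S f)"

definition Lap :: "(real \<times> real \<times> real \<Rightarrow> real) \<Rightarrow> real \<times> real \<times> real \<Rightarrow> real" where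
  "Lap f x = (\<Sum>i\<in>Basis. pderiv_dir i (pderiv_dir i f) x)"

definition test_fun :: "(real \<times> real \<times> real \<Rightarrow> real) \<Rightarrow> bool" where
  "test_fun v = (smooth_on UNIV v \<and> (\<forall>p. v p \<ge> 0) \<and>
     (\<exists>K. compact K \<and> K \<subseteq> Xspace \<and> (\<forall>p. p \<notin> K \<longrightarrow> v p = 0)))"

definition weak_subsol :: "complex poly \<Rightarrow> (real \<times> real \<times> real \<Rightarrow> real) \<Rightarrow> bool" where
  "weak_subsol P u = (continuous_on Xspace u \<and>
     (\<forall>v. test_fun v \<longrightarrow>
        set_lebesgue_integral lborel Xspace
          (\<lambda>p. - u p * Lap v p - exp (-2 * u p) * (cmod (poly P (zcoord p)))\<^sup>2 * v p) \<le> 0))"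

definition weak_supersol :: "complex poly \<Rightarrow> (real \<times> real \<times> real \<Rightarrow> real) \<Rightarrow> bool" where
  "weak_supersol P u = (continuous_on Xspace u \<and>
     (\<forall>v. test_fun v \<longrightarrow>
        set_lebesgue_integral lborel Xspace
          (\<lambda>p. - u p * Lap v p - exp (-2 * u p) * (cmod (poly P (zcoord p)))\<^sup>2 * v p) \<ge> 0))"

definition fC :: "real \<Rightarrow> real \<Rightarrow> real" where
  "fC C y = (if y \<le> C then 0 else y - C * ln (y / C) - C)"

end

theory Submission
  imports Defs
begin

lemma fub_e1:
  fixes A B :: "real \<times> real \<times> real \<Rightarrow> real"
  assumes "integrable lborel A" "integrable lborel B"
    and "\<And>q. (LBINT t. A (q + t *\<^sub>R (1,0,0))) = (LBINT t. B (q + t *\<^sub>R (1,0,0)))"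
  shows "integral\<^sup>L lborel A = integral\<^sup>L lborel B"
proof -
  have eq: "integral\<^sup>L lborel F = (\<integral>r. (\<integral>x. F (x, r) \<partial>lborel) \<partial>lborel)"
    if "integrable lborel F" for F :: "real \<times> real \<times> real \<Rightarrow> real"
  proof -
    have i: "integrable (lborel \<Otimes>\<^sub>M lborel) (case_prod (\<lambda>x r. F (x, r)))"
      using that by (simp add: lborel_prod)
    show ?thesis using lborel_pair.integral_snd[OF i] by (simp add: lborel_prod)
  qed
  have L': "(LBINT t. A (t, r)) = (LBINT t. B (t, r))" for r
  proof -
    have "(0, r) + t *\<^sub>R (1,0,0) = (t, r)" for t :: real by (simp add: prod_eq_iff)
    then show ?thesis using assms(3)[of "(0, r)"] by simp
  qed
  show ?thesis
    by (simp add: eq[OF assms(1)] eq[OF assms(2)] L')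
qed


lemma fub_outer:
  fixes F :: "real \<times> real \<times> real \<Rightarrow> real"
  assumes "integrable lborel F"
  shows "integral\<^sup>L lborel F = (LBINT x. LINT r|lborel. F (x, r))"
    and "AE x in lborel. integrable lborel (\<lambda>r. F (x, r))"
    and "(\<lambda>x. LINT r|lborel. F (x, r)) \<in> borel_measurable lborel"
proof -
  have i: "integrable (lborel \<Otimes>\<^sub>M lborel) F"
    using assms by (simp add: lborel_prod)
  show "integral\<^sup>L lborel F = (LBINT x. LINT r|lborel. F (x, r))"
    using lborel_pair.integral_fst'[OF i] by (simp add: lborel_prod)
  show "AE x in lborel. integrable lborel (\<lambda>r. F (x, r))"
    using lborel_pair.AE_integrable_fst'[OF i] .
  have m: "F \<in> borel_measurable (lborel \<Otimes>\<^sub>M lborel)"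
    using i by (rule borel_measurable_integrable)
  show "(\<lambda>x. LINT r|lborel. F (x, r)) \<in> borel_measurable lborel"
    using lborel.borel_measurable_lebesgue_integral[of "\<lambda>x r. F (x, r)" lborel] m by simp
qed

lemma inner_snd:
  fixes G :: "real \<times> real \<Rightarrow> real"
  assumes "integrable lborel G"
  shows "integral\<^sup>L lborel G = (LBINT y. LBINT x. G (x, y))"
    and "integral\<^sup>L lborel G = (LBINT x. LBINT y. G (x, y))"
proof -
  have i: "integrable (lborel \<Otimes>\<^sub>M lborel) (case_prod (\<lambda>x y. G (x, y)))"
    using assms by (simp add: lborel_prod)
  show "integral\<^sup>L lborel G = (LBINT y. LBINT x. G (x, y))"
    using lborel_pair.integral_snd[OF i] by (simp add: lborel_prod)
  show "integral\<^sup>L lborel G = (LBINT x. LBINT y. G (x, y))"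
    using lborel_pair.integral_fst[OF i] by (simp add: lborel_prod)
qed

lemma pts: "((x::real), (0::real), (y::real)) + t *\<^sub>R (0,1,0) = (x, t, y)"
  "((x::real), (y::real), (0::real)) + t *\<^sub>R (0,0,1) = (x, y, t)"
  by (simp_all add: prod_eq_iff)

lemma fub_e2:
  fixes A B :: "real \<times> real \<times> real \<Rightarrow> real"
  assumes A: "integrable lborel A" and B: "integrable lborel B"
    and L: "\<And>q. (LBINT t. A (q + t *\<^sub>R (0,1,0))) = (LBINT t. B (q + t *\<^sub>R (0,1,0)))"
  shows "integral\<^sup>L lborel A = integral\<^sup>L lborel B"
proof -
  have "AE x in lborel. (LINT r|lborel. A (x, r)) = (LINT r|lborel. B (x, r))"
    using fub_outer(2)[OF A] fub_outer(2)[OF B]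
  proof eventually_elim
    case (elim x)
    have LL: "(LBINT t. A (x, t, y)) = (LBINT t. B (x, t, y))" for y
      using L[of "(x, 0, y)"] by (simp add: pts)
    show ?case
      unfolding inner_snd(1)[OF elim(1)] inner_snd(1)[OF elim(2)] using LL by simp
  qed
  then show ?thesis
    unfolding fub_outer(1)[OF A] fub_outer(1)[OF B]
    by (rule integral_cong_AE[OF fub_outer(3)[OF A] fub_outer(3)[OF B]])
qed

lemma fub_e3:
  fixes A B :: "real \<times> real \<times> real \<Rightarrow> real"
  assumes A: "integrable lborel A" and B: "integrable lborel B"
    and L: "\<And>q. (LBINT t. A (q + t *\<^sub>R (0,0,1))) = (LBINT t. B (q + t *\<^sub>R (0,0,1)))"
  shows "integral\<^sup>L lborel A = integral\<^sup>L lborel B"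
proof -
  have "AE x in lborel. (LINT r|lborel. A (x, r)) = (LINT r|lborel. B (x, r))"
    using fub_outer(2)[OF A] fub_outer(2)[OF B]
  proof eventually_elim
    case (elim x)
    have LL: "(LBINT t. A (x, y, t)) = (LBINT t. B (x, y, t))" for y
      using L[of "(x, y, 0)"] by (simp add: pts)
    show ?case
      unfolding inner_snd(2)[OF elim(1)] inner_snd(2)[OF elim(2)] using LL by simp
  qed
  then show ?thesis
    unfolding fub_outer(1)[OF A] fub_outer(1)[OF B]
    by (rule integral_cong_AE[OF fub_outer(3)[OF A] fub_outer(3)[OF B]])
qed

lemma lbint_interval_eq:
  fixes f :: "real \<Rightarrow> real"
  assumes "continuous_on {a..b} f"
  shows "(LBINT t. indicator {a..b} t * f t) = integral {a..b} f"
    and "f integrable_on {a..b}"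
proof -
  have si: "set_integrable lborel {a..b} f"
    unfolding set_integrable_def using borel_integrable_compact[OF compact_Icc assms] .
  show "(LBINT t. indicator {a..b} t * f t) = integral {a..b} f"
    using set_borel_integral_eq_integral(2)[OF si] by (simp add: set_lebesgue_integral_def)
  show "f integrable_on {a..b}" using set_borel_integral_eq_integral(1)[OF si] .
qed

lemma deriv_cont_on:
  fixes f :: "real \<Rightarrow> real"
  assumes "\<And>t. t \<in> S \<Longrightarrow> (f has_real_derivative f' t) (at t within S)"
  shows "continuous_on S f"
  unfolding continuous_on_eq_continuous_within
  using assms DERIV_continuous by blast

lemma ibp_core:
  fixes \<phi> \<phi>1 \<phi>2 \<psi> \<psi>1 \<psi>2 :: "real \<Rightarrow> real"
  assumes ab: "a \<le> b"
    and d1: "\<And>t. t \<in> {a..b} \<Longrightarrow> (\<phi> has_real_derivative \<phi>1 t) (at t within {a..b})"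
    and d2: "\<And>t. t \<in> {a..b} \<Longrightarrow> (\<phi>1 has_real_derivative \<phi>2 t) (at t within {a..b})"
    and e1: "\<And>t. t \<in> {a..b} \<Longrightarrow> (\<psi> has_real_derivative \<psi>1 t) (at t within {a..b})"
    and e2: "\<And>t. t \<in> {a..b} \<Longrightarrow> (\<psi>1 has_real_derivative \<psi>2 t) (at t within {a..b})"
    and c1: "continuous_on {a..b} \<phi>2" and c2: "continuous_on {a..b} \<psi>2"
    and bd: "\<phi> b * \<psi>1 b - \<phi>1 b * \<psi> b = \<phi> a * \<psi>1 a - \<phi>1 a * \<psi> a"
  shows "(LBINT t. indicator {a..b} t * (\<phi> t * \<psi>2 t)) = (LBINT t. indicator {a..b} t * (\<phi>2 t * \<psi> t))"
proof -
  have cphi: "continuous_on {a..b} \<phi>" by (rule deriv_cont_on[OF d1])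
  have cpsi: "continuous_on {a..b} \<psi>" by (rule deriv_cont_on[OF e1])
  have cA: "continuous_on {a..b} (\<lambda>t. \<phi> t * \<psi>2 t)" by (intro continuous_intros cphi c2)
  have cB: "continuous_on {a..b} (\<lambda>t. \<phi>2 t * \<psi> t)" by (intro continuous_intros cpsi c1)
  have H: "((\<lambda>t. \<phi> t * \<psi>1 t - \<phi>1 t * \<psi> t) has_vector_derivative (\<phi> t * \<psi>2 t - \<phi>2 t * \<psi> t)) (at t within {a..b})"
    if "t \<in> {a..b}" for t
  proof -
    have "((\<lambda>t. \<phi> t * \<psi>1 t - \<phi>1 t * \<psi> t) has_real_derivative
        ((\<phi>1 t * \<psi>1 t + \<psi>2 t * \<phi> t) - (\<phi>2 t * \<psi> t + \<psi>1 t * \<phi>1 t))) (at t within {a..b})"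
      by (intro DERIV_diff DERIV_mult d1[OF that] d2[OF that] e1[OF that] e2[OF that])
    then show ?thesis by (simp add: has_real_derivative_iff_has_vector_derivative[symmetric] algebra_simps)
  qed
  have "((\<lambda>t. \<phi> t * \<psi>2 t - \<phi>2 t * \<psi> t) has_integral 0) {a..b}"
    using fundamental_theorem_of_calculus[OF ab H] bd by simp
  then have "integral {a..b} (\<lambda>t. \<phi> t * \<psi>2 t - \<phi>2 t * \<psi> t) = 0"
    by (rule integral_unique)
  then have "integral {a..b} (\<lambda>t. \<phi> t * \<psi>2 t) = integral {a..b} (\<lambda>t. \<phi>2 t * \<psi> t)"
    using integral_diff[OF lbint_interval_eq(2)[OF cA] lbint_interval_eq(2)[OF cB]] by simp
  then show ?thesis using lbint_interval_eq(1)[OF cA] lbint_interval_eq(1)[OF cB] by simp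
qed

lemma line_deriv_D:
  fixes f :: "real \<times> real \<times> real \<Rightarrow> real"
  assumes "(f has_derivative D) (at (q + t *\<^sub>R e))"
  shows "((\<lambda>s. f (q + s *\<^sub>R e)) has_real_derivative D e) (at t)"
proof -
  have g: "((\<lambda>s. q + s *\<^sub>R e) has_derivative (\<lambda>h. h *\<^sub>R e)) (at t)"
    by (intro derivative_eq_intros) auto
  have "((\<lambda>s. f (q + s *\<^sub>R e)) has_derivative (\<lambda>h. D (h *\<^sub>R e))) (at t)"
    using has_derivative_compose[OF g assms] .
  moreover have "(\<lambda>h. D (h *\<^sub>R e)) = (*) (D e)"
    using has_derivative_bounded_linear[OF assms] by (auto simp: fun_eq_iff linear_simps(5))
  ultimately show ?thesis by (simp add: has_field_derivative_def)
qed

lemma pderiv_eq: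
  assumes "(f has_derivative D) (at x)"
  shows "pderiv_dir e f x = D e"
proof -
  have "((\<lambda>s. f (x + s *\<^sub>R e)) has_real_derivative D e) (at 0)"
    by (rule line_deriv_D) (use assms in simp)
  then show ?thesis unfolding pderiv_dir_def by (rule DERIV_imp_deriv)
qed

lemma line_deriv:
  fixes f :: "real \<times> real \<times> real \<Rightarrow> real"
  assumes "f differentiable (at (q + t *\<^sub>R e))"
  shows "((\<lambda>s. f (q + s *\<^sub>R e)) has_real_derivative pderiv_dir e f (q + t *\<^sub>R e)) (at t)"
proof -
  obtain D where D: "(f has_derivative D) (at (q + t *\<^sub>R e))"
    using assms unfolding differentiable_def by blast
  show ?thesis using line_deriv_D[OF D] pderiv_eq[OF D] by simp
qed

lemma pderiv_add:
  assumes "f differentiable (at x)" "g differentiable (at x)"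
  shows "pderiv_dir e (\<lambda>p. f p + g p) x = pderiv_dir e f x + pderiv_dir e g x"
proof -
  obtain D where D: "(f has_derivative D) (at x)" using assms(1) unfolding differentiable_def by blast
  obtain E where E: "(g has_derivative E) (at x)" using assms(2) unfolding differentiable_def by blast
  have "((\<lambda>p. f p + g p) has_derivative (\<lambda>h. D h + E h)) (at x)"
    by (rule has_derivative_add[OF D E])
  from pderiv_eq[OF this, of e] show ?thesis using pderiv_eq[OF D, of e] pderiv_eq[OF E, of e] by simp
qed

lemma pderiv_const: "pderiv_dir e (\<lambda>_. c) x = 0"
  unfolding pderiv_dir_def by simp

lemma ev_line_in_open:
  fixes x e :: "real \<times> real \<times> real"
  assumes "open S" "x \<in> S"
  shows "eventually (\<lambda>s. x + s *\<^sub>R e \<in> S) (nhds 0)"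
proof -
  obtain r where r: "r > 0" "ball x r \<subseteq> S" using assms open_contains_ball by blast
  have "\<forall>s. dist s 0 < r / (norm e + 1) \<longrightarrow> x + s *\<^sub>R e \<in> S"
  proof (intro allI impI)
    fix s :: real assume "dist s 0 < r / (norm e + 1)"
    then have s: "\<bar>s\<bar> * (norm e + 1) < r"
      by (simp add: pos_less_divide_eq add_nonneg_pos)
    have "norm (s *\<^sub>R e) \<le> \<bar>s\<bar> * (norm e + 1)"
      by (simp add: mult_left_mono)
    then have "dist x (x + s *\<^sub>R e) < r" using s by (simp add: dist_norm)
    then show "x + s *\<^sub>R e \<in> S" using r by auto
  qed
  moreover have "r / (norm e + 1) > 0" using r by (simp add: add_nonneg_pos)
  ultimately show ?thesis unfolding eventually_nhds_metric by blast
qed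

lemma pderiv_cong:
  assumes "open S" "x \<in> S" "\<And>y. y \<in> S \<Longrightarrow> f y = g y"
  shows "pderiv_dir e f x = pderiv_dir e g x"
  unfolding pderiv_dir_def
proof (rule deriv_cong_ev[OF _ refl])
  show "\<forall>\<^sub>F s in nhds 0. f (x + s *\<^sub>R e) = g (x + s *\<^sub>R e)"
    using ev_line_in_open[OF assms(1,2), of e] by eventually_elim (use assms(3) in auto)
qed

lemma diff_cong_open:
  assumes "open S" "x \<in> S" "\<And>y. y \<in> S \<Longrightarrow> f y = g y" "f differentiable (at x)"
  shows "g differentiable (at x)"
proof -
  obtain D where D: "(f has_derivative D) (at x)" using assms(4) unfolding differentiable_def by blast
  have "(g has_derivative D) (at x)"
    by (rule has_derivative_transform_within_open[OF D assms(1,2)]) (use assms(3) in auto)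
  then show ?thesis unfolding differentiable_def by blast
qed

lemma Ck_cong:
  assumes "open S" "\<And>y. y \<in> S \<Longrightarrow> f y = g y" "Ck_on k S f"
  shows "Ck_on k S g"
  using assms(2,3)
proof (induction k arbitrary: f g)
  case 0
  then show ?case using continuous_on_eq by (metis Ck_on.simps(1))
next
  case (Suc k f g)
  have c: "continuous_on S g" using Suc.prems continuous_on_eq by (metis Ck_on.simps(2))
  have d: "\<forall>x\<in>S. g differentiable (at x)"
  proof
    fix x assume x: "x \<in> S"
    have e: "\<And>y. y \<in> S \<Longrightarrow> f y = g y" using Suc.prems(1) by blast
    have "\<forall>x\<in>S. f differentiable (at x)" using Suc.prems(2) by (simp del: Ck_on.simps(1))
    then have "f differentiable (at x)" using x by blast
    then show "g differentiable (at x)"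
      using diff_cong_open[OF assms(1) x, of f g] e by blast
  qed
  have "Ck_on k S (pderiv_dir i g)" if "i \<in> Basis" for i
  proof -
    have "Ck_on k S (pderiv_dir i f)" using Suc.prems that by auto
    moreover have "\<And>y. y \<in> S \<Longrightarrow> pderiv_dir i f y = pderiv_dir i g y"
      by (rule pderiv_cong[OF assms(1)]) (use Suc.prems(1) in auto)
    ultimately show ?thesis by (rule Suc.IH[rotated])
  qed
  then show ?case using c d by simp
qed

lemma Ck_const: "Ck_on k S (\<lambda>_. c)"
proof (induction k arbitrary: c)
  case 0 then show ?case by simp
next
  case (Suc k)
  have "pderiv_dir i (\<lambda>_. c) = (\<lambda>_. 0)" for i by (simp add: fun_eq_iff pderiv_const)
  then show ?case using Suc by simp
qed

lemma Ck_add: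
  assumes "open S"
  shows "Ck_on k S f \<Longrightarrow> Ck_on k S g \<Longrightarrow> Ck_on k S (\<lambda>x. f x + g x)"
proof (induction k arbitrary: f g)
  case 0 then show ?case by (simp add: continuous_on_add)
next
  case (Suc k f g)
  have f1: "continuous_on S f" "\<forall>x\<in>S. f differentiable (at x)" "\<forall>i\<in>Basis. Ck_on k S (pderiv_dir i f)"
    using Suc.prems(1) unfolding Ck_on.simps(2) by blast+
  have g1: "continuous_on S g" "\<forall>x\<in>S. g differentiable (at x)" "\<forall>i\<in>Basis. Ck_on k S (pderiv_dir i g)"
    using Suc.prems(2) unfolding Ck_on.simps(2) by blast+
  have "Ck_on k S (pderiv_dir i (\<lambda>x. f x + g x))" if "i \<in> Basis" for i
  proof -
    have c1: "Ck_on k S (\<lambda>x. pderiv_dir i f x + pderiv_dir i g x)"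
      using Suc.IH[OF f1(3)[rule_format, OF that] g1(3)[rule_format, OF that]] .
    have c2: "pderiv_dir i f y + pderiv_dir i g y = pderiv_dir i (\<lambda>x. f x + g x) y" if "y \<in> S" for y
      using pderiv_add[of f y g i] f1(2) g1(2) that by simp
    show ?thesis by (rule Ck_cong[OF assms c2 c1])
  qed
  moreover have "continuous_on S (\<lambda>x. f x + g x)" using f1(1) g1(1) by (rule continuous_on_add)
  moreover have "\<forall>x\<in>S. (\<lambda>x. f x + g x) differentiable (at x)" using f1(2) g1(2) by (simp add: differentiable_add)
  ultimately show ?case unfolding Ck_on.simps(2) by blast
qed

lemma ycoord_has_derivative: "(ycoord has_derivative ycoord) (at x)"
proof -
  have "bounded_linear ycoord" unfolding ycoord_def
    by (intro bounded_linear_compose[OF bounded_linear_snd] bounded_linear_snd)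
  then show ?thesis by (rule bounded_linear_imp_has_derivative)
qed

lemma Ck_ycoord: "Ck_on k S ycoord"
proof (cases k)
  case 0
  then show ?thesis using has_derivative_continuous[OF ycoord_has_derivative]
    by (simp add: continuous_at_imp_continuous_on)
next
  case (Suc k')
  have "pderiv_dir i ycoord = (\<lambda>_. ycoord i)" for i
    using pderiv_eq[OF ycoord_has_derivative] by (simp add: fun_eq_iff)
  moreover have "\<forall>x\<in>S. ycoord differentiable (at x)"
    using ycoord_has_derivative unfolding differentiable_def by blast
  ultimately show ?thesis using Suc Ck_const
    has_derivative_continuous[OF ycoord_has_derivative]
    by (auto simp: continuous_at_imp_continuous_on)
qed

lemma Ck_mono: "Ck_on (Suc k) S f \<Longrightarrow> Ck_on k S f"
proof (induction k arbitrary: f)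
  case 0 then show ?case by simp
next
  case (Suc k) then show ?case by auto
qed

lemma Basis3: "(Basis :: (real \<times> real \<times> real) set) = {(1,0,0),(0,1,0),(0,0,1)}"
  by (auto simp: Basis_prod_def zero_prod_def)

lemma ycoord_line: "ycoord (q + t *\<^sub>R e) = ycoord q + t * ycoord e"
  by (simp add: ycoord_def)

lemma vanish_pderiv:
  assumes "closed K" "\<And>p. p \<notin> K \<Longrightarrow> f p = 0" "p \<notin> K"
  shows "pderiv_dir e f p = 0"
proof -
  have "pderiv_dir e f p = pderiv_dir e (\<lambda>_. 0) p"
    by (rule pderiv_cong[of "- K"]) (use assms in auto)
  then show ?thesis by (simp add: pderiv_const)
qed

lemma Ck2_facts:
  assumes "Ck_on 2 S f" "e \<in> Basis"
  shows "continuous_on S f" "\<forall>x\<in>S. f differentiable (at x)"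
    "\<forall>x\<in>S. pderiv_dir e f differentiable (at x)"
    "continuous_on S (pderiv_dir e f)" "continuous_on S (pderiv_dir e (pderiv_dir e f))"
proof -
  have A: "Ck_on (Suc (Suc 0)) S f" using assms(1) by (simp add: numeral_2_eq_2)
  have B: "continuous_on S f" "\<forall>x\<in>S. f differentiable (at x)" "Ck_on (Suc 0) S (pderiv_dir e f)"
    using A assms(2) unfolding Ck_on.simps(2) by blast+
  have C: "continuous_on S (pderiv_dir e f)" "\<forall>x\<in>S. pderiv_dir e f differentiable (at x)"
     "Ck_on 0 S (pderiv_dir e (pderiv_dir e f))"
    using B(3) assms(2) unfolding Ck_on.simps(2) by blast+
  show "continuous_on S f" "\<forall>x\<in>S. f differentiable (at x)"
    "\<forall>x\<in>S. pderiv_dir e f differentiable (at x)"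
    "continuous_on S (pderiv_dir e f)" "continuous_on S (pderiv_dir e (pderiv_dir e f))"
    using B C by simp_all
qed

lemma line_interval:
  fixes q e :: "real \<times> real \<times> real"
  assumes K: "compact K" "K \<subseteq> Xspace" and e: "e \<in> Basis"
  shows "(\<forall>t. q + t *\<^sub>R e \<notin> K) \<or>
    (\<exists>a b. a \<le> b \<and> (\<forall>t\<in>{a..b}. q + t *\<^sub>R e \<in> Xspace) \<and> (\<forall>t. t \<notin> {a<..<b} \<longrightarrow> q + t *\<^sub>R e \<notin> K))"
proof (cases "\<forall>t. q + t *\<^sub>R e \<notin> K")
  case True then show ?thesis by blast
next
  case False
  define T where "T = (\<lambda>t. q + t *\<^sub>R e) -` K"
  have ne: "T \<noteq> {}" using False T_def by auto
  have cl: "closed T" unfolding T_def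
    by (rule continuous_closed_vimage) (use K compact_imp_closed in \<open>auto intro!: continuous_intros\<close>)
  obtain B where B: "\<And>x. x \<in> K \<Longrightarrow> norm x \<le> B"
    using compact_imp_bounded[OF K(1)] bounded_iff by blast
  have ne1: "norm e = 1" using e by (simp add: norm_Basis)
  have "bounded T"
    unfolding bounded_iff
  proof (intro exI ballI)
    fix t assume "t \<in> T"
    then have "norm (q + t *\<^sub>R e) \<le> B" using B T_def by auto
    moreover have "norm (t *\<^sub>R e) \<le> norm (q + t *\<^sub>R e) + norm q"
      using norm_triangle_sub[of "t *\<^sub>R e" "q + t *\<^sub>R e"] by (simp add: algebra_simps norm_minus_commute)
    ultimately show "norm t \<le> B + norm q" using ne1 by simp
  qed
  then have cT: "compact T" using cl compact_eq_bounded_closed by blast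
  obtain a0 where a0: "a0 \<in> T" "\<And>t. t \<in> T \<Longrightarrow> a0 \<le> t" using compact_attains_inf[OF cT ne] by blast
  obtain b0 where b0: "b0 \<in> T" "\<And>t. t \<in> T \<Longrightarrow> t \<le> b0" using compact_attains_sup[OF cT ne] by blast
  define d where "d = ycoord e"
  have d01: "d = 0 \<or> d = 1" using e unfolding d_def Basis3 by (auto simp: ycoord_def)
  define ya where "ya = ycoord q + a0 * d"
  have ya: "ya > 0" using a0(1) K(2) T_def unfolding ya_def d_def Xspace_def by (auto simp: ycoord_line)
  have ab0: "a0 \<le> b0" using a0 b0 by blast
  show ?thesis
  proof (intro disjI2 exI conjI ballI allI impI)
    show "a0 - ya / 2 \<le> b0 + 1" using ab0 ya by simp
    fix t
    assume t: "t \<in> {a0 - ya / 2..b0 + 1}"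
    have "ycoord q + t * d > 0"
      using d01
    proof
      assume "d = 0" then show ?thesis using ya ya_def by simp
    next
      assume d1: "d = 1"
      have t1: "a0 - ya / 2 \<le> t" using t by simp
      have "ycoord q + t * d = ycoord q + t" using d1 by simp
      moreover have "ya = ycoord q + a0" using d1 ya_def by simp
      ultimately show ?thesis using t1 ya by linarith
    qed
    then show "q + t *\<^sub>R e \<in> Xspace" unfolding Xspace_def d_def by (simp add: ycoord_line)
  next
    fix t assume t: "t \<notin> {a0 - ya / 2<..<b0 + 1}"
    show "q + t *\<^sub>R e \<notin> K"
    proof
      assume "q + t *\<^sub>R e \<in> K"
      then have "t \<in> T" using T_def by simp
      then show False using a0(2)[of t] b0(2)[of t] t ya by auto
    qed
  qed
qed

lemma shift_line:
  fixes F :: "real \<times> real \<times> real \<Rightarrow> real"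
  assumes "((\<lambda>s. F ((q + t *\<^sub>R e) + s *\<^sub>R e)) has_real_derivative D) (at 0)"
  shows "((\<lambda>s. F (q + s *\<^sub>R e)) has_real_derivative D) (at t)"
proof -
  have eq: "(\<lambda>s. F ((q + t *\<^sub>R e) + s *\<^sub>R e)) = (\<lambda>s. (\<lambda>s. F (q + s *\<^sub>R e)) (s + t))"
    by (simp add: fun_eq_iff algebra_simps)
  have "((\<lambda>s. (\<lambda>s. F (q + s *\<^sub>R e)) (s + t)) has_real_derivative D) (at 0)"
    using assms unfolding eq .
  then show ?thesis using DERIV_shift[of "\<lambda>s. F (q + s *\<^sub>R e)" D 0 t] by simp
qed

lemma line_generic:
  fixes F F1 F2 v :: "real \<times> real \<times> real \<Rightarrow> real"
  assumes K: "compact K" "K \<subseteq> Xspace" and e: "e \<in> Basis"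
    and vz: "\<And>p. p \<notin> K \<Longrightarrow> v p = 0"
    and V: "Ck_on 2 UNIV v"
    and hF1: "\<And>x. x \<in> Xspace \<Longrightarrow> ((\<lambda>s. F (x + s *\<^sub>R e)) has_real_derivative F1 x) (at 0)"
    and hF2: "\<And>x. x \<in> Xspace \<Longrightarrow> ((\<lambda>s. F1 (x + s *\<^sub>R e)) has_real_derivative F2 x) (at 0)"
    and cF2: "continuous_on Xspace F2"
  shows "(LBINT t. indicator Xspace (q + t *\<^sub>R e) * (F (q + t *\<^sub>R e) * pderiv_dir e (pderiv_dir e v) (q + t *\<^sub>R e)))
       = (LBINT t. indicator Xspace (q + t *\<^sub>R e) * (F2 (q + t *\<^sub>R e) * v (q + t *\<^sub>R e)))"
proof -
  have clK: "closed K" using K(1) compact_imp_closed by blast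
  have v1z: "pderiv_dir e v p = 0" if "p \<notin> K" for p
    by (rule vanish_pderiv[OF clK vz that])
  have v2z: "pderiv_dir e (pderiv_dir e v) p = 0" if "p \<notin> K" for p
    by (rule vanish_pderiv[OF clK v1z that])
  note VF = Ck2_facts[OF V e]
  have vd: "v differentiable (at x)" for x using VF(2) by blast
  have v1d: "pderiv_dir e v differentiable (at x)" for x using VF(3) by blast
  consider (none) "\<forall>t. q + t *\<^sub>R e \<notin> K"
    | (int) a b where "a \<le> b" "\<forall>t\<in>{a..b}. q + t *\<^sub>R e \<in> Xspace" "\<forall>t. t \<notin> {a<..<b} \<longrightarrow> q + t *\<^sub>R e \<notin> K"
    using line_interval[OF K e, of q] by blast
  then show ?thesis
  proof cases
    case none
    then show ?thesis using vz v2z by simp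
  next
    case int
    let ?\<phi> = "\<lambda>t. F (q + t *\<^sub>R e)" and ?\<phi>1 = "\<lambda>t. F1 (q + t *\<^sub>R e)" and ?\<phi>2 = "\<lambda>t. F2 (q + t *\<^sub>R e)"
    let ?\<psi> = "\<lambda>t. v (q + t *\<^sub>R e)" and ?\<psi>1 = "\<lambda>t. pderiv_dir e v (q + t *\<^sub>R e)"
      and ?\<psi>2 = "\<lambda>t. pderiv_dir e (pderiv_dir e v) (q + t *\<^sub>R e)"
    have L1: "(\<lambda>t. indicator Xspace (q + t *\<^sub>R e) * (F (q + t *\<^sub>R e) * pderiv_dir e (pderiv_dir e v) (q + t *\<^sub>R e)))
        = (\<lambda>t. indicator {a..b} t * (?\<phi> t * ?\<psi>2 t))"
    proof
      fix t show "indicator Xspace (q + t *\<^sub>R e) * (F (q + t *\<^sub>R e) * pderiv_dir e (pderiv_dir e v) (q + t *\<^sub>R e))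
        = indicator {a..b} t * (?\<phi> t * ?\<psi>2 t)"
      proof (cases "t \<in> {a..b}")
        case True then show ?thesis using int(2) by simp
      next
        case False
        then have "t \<notin> {a<..<b}" by auto
        then show ?thesis using int(3) v2z False by simp
      qed
    qed
    have L2: "(\<lambda>t. indicator Xspace (q + t *\<^sub>R e) * (F2 (q + t *\<^sub>R e) * v (q + t *\<^sub>R e)))
        = (\<lambda>t. indicator {a..b} t * (?\<phi>2 t * ?\<psi> t))"
    proof
      fix t show "indicator Xspace (q + t *\<^sub>R e) * (F2 (q + t *\<^sub>R e) * v (q + t *\<^sub>R e))
        = indicator {a..b} t * (?\<phi>2 t * ?\<psi> t)"
      proof (cases "t \<in> {a..b}")
        case True then show ?thesis using int(2) by simp
      next
        case False
        then have "t \<notin> {a<..<b}" by auto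
        then show ?thesis using int(3) vz False by simp
      qed
    qed
    have core: "(LBINT t. indicator {a..b} t * (?\<phi> t * ?\<psi>2 t)) = (LBINT t. indicator {a..b} t * (?\<phi>2 t * ?\<psi> t))"
    proof (rule ibp_core[OF int(1)])
      fix t assume t: "t \<in> {a..b}"
      have X: "q + t *\<^sub>R e \<in> Xspace" using int(2) t by blast
      show "(?\<phi> has_real_derivative ?\<phi>1 t) (at t within {a..b})"
        by (rule has_field_derivative_at_within, rule shift_line, rule hF1[OF X])
      show "(?\<phi>1 has_real_derivative ?\<phi>2 t) (at t within {a..b})"
        by (rule has_field_derivative_at_within, rule shift_line, rule hF2[OF X])
      show "(?\<psi> has_real_derivative ?\<psi>1 t) (at t within {a..b})"
        by (rule has_field_derivative_at_within, rule line_deriv, rule vd)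
      show "(?\<psi>1 has_real_derivative ?\<psi>2 t) (at t within {a..b})"
        by (rule has_field_derivative_at_within, rule line_deriv, rule v1d)
    next
      show "continuous_on {a..b} ?\<phi>2"
        by (rule continuous_on_compose2[OF cF2]) (use int(2) in \<open>auto intro!: continuous_intros\<close>)
      show "continuous_on {a..b} ?\<psi>2"
        by (rule continuous_on_compose2[OF VF(5)]) (auto intro!: continuous_intros)
      have "a \<notin> {a<..<b}" "b \<notin> {a<..<b}" by auto
      then have "q + a *\<^sub>R e \<notin> K" "q + b *\<^sub>R e \<notin> K" using int(3) by blast+
      then show "?\<phi> b * ?\<psi>1 b - ?\<phi>1 b * ?\<psi> b = ?\<phi> a * ?\<psi>1 a - ?\<phi>1 a * ?\<psi> a"
        using vz v1z by simp
    qed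
    show ?thesis unfolding L1 L2 using core .
  qed
qed

lemma int_Kfun:
  fixes h \<phi> :: "real \<times> real \<times> real \<Rightarrow> real"
  assumes K: "compact K" "K \<subseteq> Xspace" and ch: "continuous_on Xspace h"
    and c\<phi>: "continuous_on UNIV \<phi>" and \<phi>z: "\<And>p. p \<notin> K \<Longrightarrow> \<phi> p = 0"
  shows "integrable lborel (\<lambda>p. indicator Xspace p * (h p * \<phi> p))"
proof -
  have eq: "(\<lambda>p. indicator Xspace p * (h p * \<phi> p)) = (\<lambda>p. indicator K p *\<^sub>R (h p * \<phi> p))"
  proof
    fix p show "indicator Xspace p * (h p * \<phi> p) = indicator K p *\<^sub>R (h p * \<phi> p)"
      using K(2) \<phi>z[of p] by (cases "p \<in> K") (auto simp: indicator_def)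
  qed
  have "continuous_on K (\<lambda>p. h p * \<phi> p)"
    using continuous_on_subset[OF ch K(2)] continuous_on_subset[OF c\<phi>, of K]
    by (intro continuous_on_mult) auto
  then show ?thesis unfolding eq by (rule borel_integrable_compact[OF K(1)])
qed

lemma fub_any:
  fixes A B :: "real \<times> real \<times> real \<Rightarrow> real"
  assumes "e \<in> Basis" "integrable lborel A" "integrable lborel B"
    and "\<And>q. (LBINT t. A (q + t *\<^sub>R e)) = (LBINT t. B (q + t *\<^sub>R e))"
  shows "integral\<^sup>L lborel A = integral\<^sup>L lborel B"
proof -
  have "e = (1,0,0) \<or> e = (0,1,0) \<or> e = (0,0,1)" using assms(1) unfolding Basis3 by blast
  then show ?thesis
  proof (elim disjE)
    assume "e = (1,0,0)" then show ?thesis using fub_e1[OF assms(2,3)] assms(4) by blast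
  next
    assume "e = (0,1,0)" then show ?thesis using fub_e2[OF assms(2,3)] assms(4) by blast
  next
    assume "e = (0,0,1)" then show ?thesis using fub_e3[OF assms(2,3)] assms(4) by blast
  qed
qed

lemma IBP_generic:
  fixes F F1 F2 v :: "real \<times> real \<times> real \<Rightarrow> real"
  assumes K: "compact K" "K \<subseteq> Xspace" and e: "e \<in> Basis"
    and vz: "\<And>p. p \<notin> K \<Longrightarrow> v p = 0"
    and V: "Ck_on 2 UNIV v"
    and hF1: "\<And>x. x \<in> Xspace \<Longrightarrow> ((\<lambda>s. F (x + s *\<^sub>R e)) has_real_derivative F1 x) (at 0)"
    and hF2: "\<And>x. x \<in> Xspace \<Longrightarrow> ((\<lambda>s. F1 (x + s *\<^sub>R e)) has_real_derivative F2 x) (at 0)"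
    and cF2: "continuous_on Xspace F2" and cF: "continuous_on Xspace F"
  shows "integral\<^sup>L lborel (\<lambda>p. indicator Xspace p * (F p * pderiv_dir e (pderiv_dir e v) p))
       = integral\<^sup>L lborel (\<lambda>p. indicator Xspace p * (F2 p * v p))"
    and "integrable lborel (\<lambda>p. indicator Xspace p * (F p * pderiv_dir e (pderiv_dir e v) p))"
    and "integrable lborel (\<lambda>p. indicator Xspace p * (F2 p * v p))"
proof -
  have clK: "closed K" using K(1) compact_imp_closed by blast
  have v1z: "pderiv_dir e v p = 0" if "p \<notin> K" for p
    by (rule vanish_pderiv[OF clK vz that])
  have v2z: "pderiv_dir e (pderiv_dir e v) p = 0" if "p \<notin> K" for p
    by (rule vanish_pderiv[OF clK v1z that])
  note VF = Ck2_facts[OF V e]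
  show iA: "integrable lborel (\<lambda>p. indicator Xspace p * (F p * pderiv_dir e (pderiv_dir e v) p))"
    by (rule int_Kfun[OF K cF VF(5) v2z])
  show iB: "integrable lborel (\<lambda>p. indicator Xspace p * (F2 p * v p))"
    by (rule int_Kfun[OF K cF2 VF(1) vz])
  show "integral\<^sup>L lborel (\<lambda>p. indicator Xspace p * (F p * pderiv_dir e (pderiv_dir e v) p))
       = integral\<^sup>L lborel (\<lambda>p. indicator Xspace p * (F2 p * v p))"
    by (rule fub_any[OF e iA iB], rule line_generic[OF K e vz V hF1 hF2 cF2])
qed

lemma IBP_C2:
  fixes F v :: "real \<times> real \<times> real \<Rightarrow> real"
  assumes K: "compact K" "K \<subseteq> Xspace" and e: "e \<in> Basis"
    and vz: "\<And>p. p \<notin> K \<Longrightarrow> v p = 0"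
    and V: "Ck_on 2 UNIV v" and F: "Ck_on 2 Xspace F"
  shows "integral\<^sup>L lborel (\<lambda>p. indicator Xspace p * (F p * pderiv_dir e (pderiv_dir e v) p))
       = integral\<^sup>L lborel (\<lambda>p. indicator Xspace p * (pderiv_dir e (pderiv_dir e F) p * v p))"
    and "integrable lborel (\<lambda>p. indicator Xspace p * (F p * pderiv_dir e (pderiv_dir e v) p))"
    and "integrable lborel (\<lambda>p. indicator Xspace p * (pderiv_dir e (pderiv_dir e F) p * v p))"
proof -
  note FF = Ck2_facts[OF F e]
  have hF1: "((\<lambda>s. F (x + s *\<^sub>R e)) has_real_derivative pderiv_dir e F x) (at 0)" if "x \<in> Xspace" for x
    using line_deriv[of F x 0 e] FF(2) that by simp
  have hF2: "((\<lambda>s. pderiv_dir e F (x + s *\<^sub>R e)) has_real_derivative pderiv_dir e (pderiv_dir e F) x) (at 0)"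
    if "x \<in> Xspace" for x
    using line_deriv[of "pderiv_dir e F" x 0 e] FF(3) that by simp
  note R = IBP_generic[OF K e vz V hF1 hF2 FF(5) FF(1)]
  show "integral\<^sup>L lborel (\<lambda>p. indicator Xspace p * (F p * pderiv_dir e (pderiv_dir e v) p))
       = integral\<^sup>L lborel (\<lambda>p. indicator Xspace p * (pderiv_dir e (pderiv_dir e F) p * v p))"
    "integrable lborel (\<lambda>p. indicator Xspace p * (F p * pderiv_dir e (pderiv_dir e v) p))"
    "integrable lborel (\<lambda>p. indicator Xspace p * (pderiv_dir e (pderiv_dir e F) p * v p))"
    using R by blast+
qed

definition hC :: "real \<Rightarrow> real \<Rightarrow> real" where
  "hC C y = y - C * ln (y / C) - C"

definition gC :: "real \<Rightarrow> real \<Rightarrow> real" where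
  "gC C y = (if y < C then 0 else C / y\<^sup>2)"

lemma fC_eq_hC: "C > 0 \<Longrightarrow> y \<ge> C \<Longrightarrow> fC C y = hC C y"
  by (cases "y = C") (auto simp: fC_def hC_def)

lemma fC_zero: "y \<le> C \<Longrightarrow> fC C y = 0"
  by (simp add: fC_def)

lemma hC_deriv:
  assumes "C > 0" "c + t > 0"
  shows "((\<lambda>t. hC C (c + t)) has_real_derivative (1 - C / (c + t))) (at t)"
proof -
  have "((\<lambda>t. (c + t) - C * ln ((c + t) / C) - C) has_real_derivative (1 - C / (c + t))) (at t)"
    using assms by (auto intro!: derivative_eq_intros simp: field_simps)
  then show ?thesis unfolding hC_def .
qed

lemma hC1_deriv:
  assumes "c + t > 0"
  shows "((\<lambda>t. 1 - C / (c + t)) has_real_derivative (C / (c + t)\<^sup>2)) (at t)"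
  using assms by (auto intro!: derivative_eq_intros simp: field_simps power2_eq_square)

lemma line_fC3:
  fixes v :: "real \<times> real \<times> real \<Rightarrow> real"
  assumes C: "C > 0" and K: "compact K" "K \<subseteq> Xspace"
    and vz: "\<And>p. p \<notin> K \<Longrightarrow> v p = 0"
    and V: "Ck_on 2 UNIV v"
  defines "e \<equiv> (0::real, 0::real, 1::real)"
  shows "(LBINT t. indicator Xspace (q + t *\<^sub>R e) * (fC C (ycoord (q + t *\<^sub>R e)) * pderiv_dir e (pderiv_dir e v) (q + t *\<^sub>R e)))
       = (LBINT t. indicator Xspace (q + t *\<^sub>R e) * (gC C (ycoord (q + t *\<^sub>R e)) * v (q + t *\<^sub>R e)))"
proof -
  have e: "e \<in> Basis" unfolding e_def Basis3 by simp
  have yl: "ycoord (q + t *\<^sub>R e) = ycoord q + t" for t unfolding e_def by (simp add: ycoord_def)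
  define c where "c = ycoord q"
  have clK: "closed K" using K(1) compact_imp_closed by blast
  have v1z: "pderiv_dir e v p = 0" if "p \<notin> K" for p
    by (rule vanish_pderiv[OF clK vz that])
  have v2z: "pderiv_dir e (pderiv_dir e v) p = 0" if "p \<notin> K" for p
    by (rule vanish_pderiv[OF clK v1z that])
  note VF = Ck2_facts[OF V e]
  have vd: "v differentiable (at x)" for x using VF(2) by blast
  have v1d: "pderiv_dir e v differentiable (at x)" for x using VF(3) by blast
  consider (none) "\<forall>t. q + t *\<^sub>R e \<notin> K"
    | (int) a b where "a \<le> b" "\<forall>t\<in>{a..b}. q + t *\<^sub>R e \<in> Xspace" "\<forall>t. t \<notin> {a<..<b} \<longrightarrow> q + t *\<^sub>R e \<notin> K"
    using line_interval[OF K e, of q] by blast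
  then show ?thesis
  proof cases
    case none
    then show ?thesis using vz v2z by simp
  next
    case int
    let ?\<psi> = "\<lambda>t. v (q + t *\<^sub>R e)" and ?\<psi>1 = "\<lambda>t. pderiv_dir e v (q + t *\<^sub>R e)"
      and ?\<psi>2 = "\<lambda>t. pderiv_dir e (pderiv_dir e v) (q + t *\<^sub>R e)"
    have z: "?\<psi> t = 0" "?\<psi>1 t = 0" "?\<psi>2 t = 0" if "t \<notin> {a<..<b}" for t
      using int(3) that vz v1z v2z by blast+
    define \<alpha> where "\<alpha> = max a (C - c)"
    show ?thesis
    proof (cases "\<alpha> \<le> b")
      case False
      have Z1: "indicator Xspace (q + t *\<^sub>R e) * (fC C (ycoord (q + t *\<^sub>R e)) * ?\<psi>2 t) = 0" for t
      proof (cases "t \<in> {a<..<b}")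
        case True
        then have "c + t \<le> C" using False \<alpha>_def by auto
        then show ?thesis by (simp add: yl c_def fC_zero)
      qed (use z in simp)
      have Z2: "indicator Xspace (q + t *\<^sub>R e) * (gC C (ycoord (q + t *\<^sub>R e)) * ?\<psi> t) = 0" for t
      proof (cases "t \<in> {a<..<b}")
        case True
        then have "c + t < C" using False \<alpha>_def by auto
        then show ?thesis by (simp add: yl c_def gC_def)
      qed (use z in simp)
      show ?thesis by (simp only: Z1 Z2)
    next
      case True
      have aa: "a \<le> \<alpha>" "C - c \<le> \<alpha>" unfolding \<alpha>_def by auto
      let ?\<phi> = "\<lambda>t. hC C (c + t)" and ?\<phi>1 = "\<lambda>t. 1 - C / (c + t)" and ?\<phi>2 = "\<lambda>t. C / (c + t)\<^sup>2"
      have L1: "indicator Xspace (q + t *\<^sub>R e) * (fC C (ycoord (q + t *\<^sub>R e)) * ?\<psi>2 t)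
          = indicator {\<alpha>..b} t * (?\<phi> t * ?\<psi>2 t)" for t
      proof (cases "t \<in> {a<..<b}")
        case tin: True
        then have X: "q + t *\<^sub>R e \<in> Xspace" using int(2) by auto
        show ?thesis
        proof (cases "\<alpha> \<le> t")
          case True
          then have "c + t \<ge> C" using aa by linarith
          then show ?thesis using X True tin C by (simp add: yl c_def fC_eq_hC)
        next
          case False
          then have "c + t \<le> C" using tin \<alpha>_def by auto
          then show ?thesis using False by (simp add: yl c_def fC_zero)
        qed
      qed (use z in simp)
      have L2: "indicator Xspace (q + t *\<^sub>R e) * (gC C (ycoord (q + t *\<^sub>R e)) * ?\<psi> t)
          = indicator {\<alpha>..b} t * (?\<phi>2 t * ?\<psi> t)" for t
      proof (cases "t \<in> {a<..<b}")
        case tin: True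
        then have X: "q + t *\<^sub>R e \<in> Xspace" using int(2) by auto
        show ?thesis
        proof (cases "\<alpha> \<le> t")
          case True
          then have "c + t \<ge> C" using aa by linarith
          then show ?thesis using X True tin C by (simp add: yl c_def gC_def)
        next
          case False
          then have "c + t < C" using tin \<alpha>_def by auto
          then show ?thesis using False by (simp add: yl c_def gC_def)
        qed
      qed (use z in simp)
      have pos: "c + t > 0" if "t \<in> {\<alpha>..b}" for t using that aa C by auto
      have core: "(LBINT t. indicator {\<alpha>..b} t * (?\<phi> t * ?\<psi>2 t)) = (LBINT t. indicator {\<alpha>..b} t * (?\<phi>2 t * ?\<psi> t))"
      proof (rule ibp_core[OF True])
        fix t assume t: "t \<in> {\<alpha>..b}"
        show "(?\<phi> has_real_derivative ?\<phi>1 t) (at t within {\<alpha>..b})"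
          by (rule has_field_derivative_at_within, rule hC_deriv[OF C pos[OF t]])
        show "(?\<phi>1 has_real_derivative ?\<phi>2 t) (at t within {\<alpha>..b})"
          by (rule has_field_derivative_at_within, rule hC1_deriv[OF pos[OF t]])
        show "(?\<psi> has_real_derivative ?\<psi>1 t) (at t within {\<alpha>..b})"
          by (rule has_field_derivative_at_within, rule line_deriv, rule vd)
        show "(?\<psi>1 has_real_derivative ?\<psi>2 t) (at t within {\<alpha>..b})"
          by (rule has_field_derivative_at_within, rule line_deriv, rule v1d)
      next
        show "continuous_on {\<alpha>..b} ?\<phi>2"
          using pos by (intro continuous_intros) (auto, fastforce)
        show "continuous_on {\<alpha>..b} ?\<psi>2"
          by (rule continuous_on_compose2[OF VF(5)]) (auto intro!: continuous_intros)
        have "b \<notin> {a<..<b}" by auto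
        then have b0: "?\<phi> b * ?\<psi>1 b - ?\<phi>1 b * ?\<psi> b = 0" using z by simp
        have "?\<phi> \<alpha> * ?\<psi>1 \<alpha> - ?\<phi>1 \<alpha> * ?\<psi> \<alpha> = 0"
        proof (cases "a \<le> C - c")
          case True
          then have "\<alpha> = C - c" unfolding \<alpha>_def by simp
          then show ?thesis using C by (simp add: hC_def)
        next
          case False
          then have "\<alpha> = a" unfolding \<alpha>_def by simp
          moreover have "a \<notin> {a<..<b}" by auto
          ultimately show ?thesis using z by simp
        qed
        then show "?\<phi> b * ?\<psi>1 b - ?\<phi>1 b * ?\<psi> b = ?\<phi> \<alpha> * ?\<psi>1 \<alpha> - ?\<phi>1 \<alpha> * ?\<psi> \<alpha>"
          using b0 by simp
      qed
      show ?thesis unfolding L1 L2 using core .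
    qed
  qed
qed

lemma cont_ycoord: "continuous_on S ycoord"
  unfolding ycoord_def by (intro continuous_intros)

lemma open_Xspace: "open Xspace"
proof -
  have "Xspace = ycoord -` {0<..}" unfolding Xspace_def by auto
  then show ?thesis using continuous_open_vimage[of "{0<..}" ycoord] cont_ycoord
    by (simp add: continuous_on_eq_continuous_within)
qed

lemma cont_fC:
  assumes C: "C > 0"
  shows "continuous_on Xspace (\<lambda>p. fC C (ycoord p))"
proof -
  have eq: "(\<lambda>p. fC C (ycoord p)) = (\<lambda>p. if ycoord p \<le> C then 0 else hC C (ycoord p))"
    by (simp add: fun_eq_iff fC_def hC_def)
  have c2: "continuous_on {x \<in> Xspace. C \<le> ycoord x} (\<lambda>p. hC C (ycoord p))"
    unfolding hC_def using C
    by (intro continuous_intros cont_ycoord) auto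
  show ?thesis unfolding eq
    by (rule continuous_on_cases_le[OF continuous_on_const c2 cont_ycoord]) (simp add: hC_def)
qed

lemma gC_bounds: "C > 0 \<Longrightarrow> 0 \<le> gC C y \<and> gC C y \<le> 1 / C"
proof -
  assume C: "C > 0"
  show ?thesis
  proof (cases "y < C")
    case False
    then have y: "y \<ge> C" by simp
    have "C\<^sup>2 \<le> y\<^sup>2" using y C by (simp add: power_mono)
    have yp: "y > 0" using y C by simp
    then have "C / y\<^sup>2 \<le> C / C\<^sup>2" using C \<open>C\<^sup>2 \<le> y\<^sup>2\<close> by (intro divide_left_mono) auto
    also have "\<dots> = 1 / C" by (simp add: power2_eq_square)
    finally show ?thesis using False C by (simp add: gC_def)
  qed (use C in \<open>simp add: gC_def\<close>)
qed

lemma meas_B: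
  fixes v :: "real \<times> real \<times> real \<Rightarrow> real"
  assumes "continuous_on UNIV v"
  shows "(\<lambda>p. indicator Xspace p * (gC C (ycoord p) * v p)) \<in> borel_measurable lborel"
proof -
  have X[measurable]: "Xspace \<in> sets borel" using open_Xspace by simp
  have v[measurable]: "v \<in> borel_measurable borel" using assms by (rule borel_measurable_continuous_onI)
  have g[measurable]: "(\<lambda>y. gC C y) \<in> borel_measurable borel" unfolding gC_def by measurable
  have y[measurable]: "ycoord \<in> borel_measurable borel"
    by (rule borel_measurable_continuous_onI[OF cont_ycoord])
  have "(\<lambda>p. indicator Xspace p * (gC C (ycoord p) * v p)) \<in> borel_measurable borel" by measurable
  then show ?thesis by simp
qed

lemma IBP_fC3:
  fixes v :: "real \<times> real \<times> real \<Rightarrow> real"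
  assumes C: "C > 0" and K: "compact K" "K \<subseteq> Xspace"
    and vz: "\<And>p. p \<notin> K \<Longrightarrow> v p = 0"
    and V: "Ck_on 2 UNIV v"
  shows "integral\<^sup>L lborel (\<lambda>p. indicator Xspace p * (fC C (ycoord p) * pderiv_dir (0,0,1) (pderiv_dir (0,0,1) v) p))
       = integral\<^sup>L lborel (\<lambda>p. indicator Xspace p * (gC C (ycoord p) * v p))"
    and "integrable lborel (\<lambda>p. indicator Xspace p * (fC C (ycoord p) * pderiv_dir (0,0,1) (pderiv_dir (0,0,1) v) p))"
    and "integrable lborel (\<lambda>p. indicator Xspace p * (gC C (ycoord p) * v p))"
proof -
  have e: "(0::real,0::real,1::real) \<in> Basis" unfolding Basis3 by simp
  have clK: "closed K" using K(1) compact_imp_closed by blast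
  have v1z: "pderiv_dir (0,0,1) v p = 0" if "p \<notin> K" for p
    by (rule vanish_pderiv[OF clK vz that])
  have v2z: "pderiv_dir (0,0,1) (pderiv_dir (0,0,1) v) p = 0" if "p \<notin> K" for p
    by (rule vanish_pderiv[OF clK v1z that])
  note VF = Ck2_facts[OF V e]
  show iA: "integrable lborel (\<lambda>p. indicator Xspace p * (fC C (ycoord p) * pderiv_dir (0,0,1) (pderiv_dir (0,0,1) v) p))"
    by (rule int_Kfun[OF K cont_fC[OF C] VF(5) v2z])
  have bnd: "integrable lborel (\<lambda>p. indicator Xspace p * (1 / C * v p))"
    by (rule int_Kfun[OF K continuous_on_const VF(1) vz])
  show iB: "integrable lborel (\<lambda>p. indicator Xspace p * (gC C (ycoord p) * v p))"
  proof (rule Bochner_Integration.integrable_bound[OF bnd meas_B[OF VF(1)]], rule AE_I2)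
    fix p
    have g: "0 \<le> gC C (ycoord p)" "gC C (ycoord p) \<le> 1 / C" using gC_bounds[OF C] by auto
    have "\<bar>gC C (ycoord p) * v p\<bar> \<le> \<bar>1 / C * v p\<bar>"
    proof -
      have "gC C (ycoord p) * \<bar>v p\<bar> \<le> 1 / C * \<bar>v p\<bar>"
        using g(2) by (rule mult_right_mono) simp
      then show ?thesis using g(1) C by (simp add: abs_mult)
    qed
    then show "norm (indicator Xspace p * (gC C (ycoord p) * v p)) \<le> norm (indicator Xspace p * (1 / C * v p))"
      by (simp add: abs_mult indicator_def)
  qed
  show "integral\<^sup>L lborel (\<lambda>p. indicator Xspace p * (fC C (ycoord p) * pderiv_dir (0,0,1) (pderiv_dir (0,0,1) v) p))
       = integral\<^sup>L lborel (\<lambda>p. indicator Xspace p * (gC C (ycoord p) * v p))"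
    by (rule fub_e3[OF iA iB], rule line_fC3[OF C K vz V])
qed

lemma IBP_fC12:
  fixes v :: "real \<times> real \<times> real \<Rightarrow> real"
  assumes C: "C > 0" and K: "compact K" "K \<subseteq> Xspace"
    and vz: "\<And>p. p \<notin> K \<Longrightarrow> v p = 0"
    and V: "Ck_on 2 UNIV v" and e: "e \<in> Basis" and ye: "ycoord e = 0"
  shows "integral\<^sup>L lborel (\<lambda>p. indicator Xspace p * (fC C (ycoord p) * pderiv_dir e (pderiv_dir e v) p)) = 0"
    and "integrable lborel (\<lambda>p. indicator Xspace p * (fC C (ycoord p) * pderiv_dir e (pderiv_dir e v) p))"
proof -
  have hF1: "((\<lambda>s. fC C (ycoord (x + s *\<^sub>R e))) has_real_derivative (\<lambda>_. 0) x) (at 0)" for x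
  proof -
    have "(\<lambda>s. fC C (ycoord (x + s *\<^sub>R e))) = (\<lambda>s. fC C (ycoord x))" by (simp add: ycoord_line ye)
    then show ?thesis by simp
  qed
  have hF2: "((\<lambda>s. (\<lambda>_. 0::real) (x + s *\<^sub>R e)) has_real_derivative (\<lambda>_. 0) x) (at 0)" for x
    by simp
  note R = IBP_generic[OF K e vz V hF1 hF2 continuous_on_const cont_fC[OF C]]
  show "integral\<^sup>L lborel (\<lambda>p. indicator Xspace p * (fC C (ycoord p) * pderiv_dir e (pderiv_dir e v) p)) = 0"
    using R(1) by simp
  show "integrable lborel (\<lambda>p. indicator Xspace p * (fC C (ycoord p) * pderiv_dir e (pderiv_dir e v) p))"
    using R(2) .
qed

lemma Lap3: "Lap f p = pderiv_dir (1,0,0) (pderiv_dir (1,0,0) f) p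
   + pderiv_dir (0,1,0) (pderiv_dir (0,1,0) f) p + pderiv_dir (0,0,1) (pderiv_dir (0,0,1) f) p"
  unfolding Lap_def Basis3 by simp

lemma lin4:
  fixes a1 a2 a3 a4 :: "'a \<Rightarrow> real"
  assumes "integrable M a1" "integrable M a2" "integrable M a3" "integrable M a4"
  shows "integral\<^sup>L M (\<lambda>p. - a1 p - a2 p - a3 p - a4 p)
     = - integral\<^sup>L M a1 - integral\<^sup>L M a2 - integral\<^sup>L M a3 - integral\<^sup>L M a4"
proof -
  have i1: "integrable M (\<lambda>p. - a1 p)" using assms by simp
  have i2: "integrable M (\<lambda>p. - a1 p - a2 p)" using assms by simp
  have i3: "integrable M (\<lambda>p. - a1 p - a2 p - a3 p)" using assms by simp
  have "integral\<^sup>L M (\<lambda>p. - a1 p - a2 p - a3 p - a4 p) = integral\<^sup>L M (\<lambda>p. - a1 p - a2 p - a3 p) - integral\<^sup>L M a4"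
    by (rule Bochner_Integration.integral_diff[OF i3 assms(4)])
  also have "integral\<^sup>L M (\<lambda>p. - a1 p - a2 p - a3 p) = integral\<^sup>L M (\<lambda>p. - a1 p - a2 p) - integral\<^sup>L M a3"
    by (rule Bochner_Integration.integral_diff[OF i2 assms(3)])
  also have "integral\<^sup>L M (\<lambda>p. - a1 p - a2 p) = integral\<^sup>L M (\<lambda>p. - a1 p) - integral\<^sup>L M a2"
    by (rule Bochner_Integration.integral_diff[OF i1 assms(2)])
  also have "integral\<^sup>L M (\<lambda>p. - a1 p) = - integral\<^sup>L M a1"
    by (rule Bochner_Integration.integral_minus)
  finally show ?thesis .
qed

lemma weak_identity:
  fixes F G v :: "real \<times> real \<times> real \<Rightarrow> real"
  assumes K: "compact K" "K \<subseteq> Xspace" and vz: "\<And>p. p \<notin> K \<Longrightarrow> v p = 0"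
    and V: "Ck_on 2 UNIV v" and F: "Ck_on 2 Xspace F" and G: "continuous_on Xspace G"
  shows "(LINT p|lborel. indicator Xspace p * (- F p * Lap v p - G p * v p))
       = (LINT p|lborel. indicator Xspace p * ((- Lap F p - G p) * v p))"
    and "integrable lborel (\<lambda>p. indicator Xspace p * (- F p * Lap v p - G p * v p))"
    and "integrable lborel (\<lambda>p. indicator Xspace p * ((- Lap F p - G p) * v p))"
proof -
  have b: "(1::real,0::real,0::real) \<in> Basis" "(0::real,1::real,0::real) \<in> Basis" "(0::real,0::real,1::real) \<in> Basis"
    unfolding Basis3 by simp_all
  note R1 = IBP_C2[OF K b(1) vz V F] and R2 = IBP_C2[OF K b(2) vz V F] and R3 = IBP_C2[OF K b(3) vz V F]
  have VF: "continuous_on UNIV v" using Ck2_facts[OF V b(1)] by simp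
  have iG: "integrable lborel (\<lambda>p. indicator Xspace p * (G p * v p))"
    by (rule int_Kfun[OF K G VF vz])
  have eq1: "(\<lambda>p. indicator Xspace p * (- F p * Lap v p - G p * v p)) =
    (\<lambda>p. - (indicator Xspace p * (F p * pderiv_dir (1,0,0) (pderiv_dir (1,0,0) v) p))
         - (indicator Xspace p * (F p * pderiv_dir (0,1,0) (pderiv_dir (0,1,0) v) p))
         - (indicator Xspace p * (F p * pderiv_dir (0,0,1) (pderiv_dir (0,0,1) v) p))
         - (indicator Xspace p * (G p * v p)))"
    by (simp add: fun_eq_iff Lap3 algebra_simps)
  have eq2: "(\<lambda>p. indicator Xspace p * ((- Lap F p - G p) * v p)) =
    (\<lambda>p. - (indicator Xspace p * (pderiv_dir (1,0,0) (pderiv_dir (1,0,0) F) p * v p))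
         - (indicator Xspace p * (pderiv_dir (0,1,0) (pderiv_dir (0,1,0) F) p * v p))
         - (indicator Xspace p * (pderiv_dir (0,0,1) (pderiv_dir (0,0,1) F) p * v p))
         - (indicator Xspace p * (G p * v p)))"
    by (simp add: fun_eq_iff Lap3 algebra_simps)
  note L1 = lin4[OF R1(2) R2(2) R3(2) iG] and L2 = lin4[OF R1(3) R2(3) R3(3) iG]
  show "(LINT p|lborel. indicator Xspace p * (- F p * Lap v p - G p * v p))
       = (LINT p|lborel. indicator Xspace p * ((- Lap F p - G p) * v p))"
    unfolding eq1 eq2 using L1 L2 R1(1) R2(1) R3(1) by simp
  show "integrable lborel (\<lambda>p. indicator Xspace p * (- F p * Lap v p - G p * v p))"
    unfolding eq1 using R1(2) R2(2) R3(2) iG by (intro Bochner_Integration.integrable_diff integrable_minus)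
  show "integrable lborel (\<lambda>p. indicator Xspace p * ((- Lap F p - G p) * v p))"
    unfolding eq2 using R1(3) R2(3) R3(3) iG by (intro Bochner_Integration.integrable_diff integrable_minus)
qed

lemma Lap_add_y:
  assumes F: "Ck_on 2 Xspace F" and p: "p \<in> Xspace"
  shows "Lap (\<lambda>q. F q + ycoord q) p = Lap F p"
  unfolding Lap_def
proof (rule sum.cong[OF refl])
  fix i :: "real \<times> real \<times> real" assume i: "i \<in> Basis"
  note FF = Ck2_facts[OF F i]
  have yd: "ycoord differentiable (at x)" for x
    using ycoord_has_derivative unfolding differentiable_def by blast
  have e1: "pderiv_dir i (\<lambda>q. F q + ycoord q) x = pderiv_dir i F x + ycoord i" if "x \<in> Xspace" for x
    using pderiv_add[of F x ycoord i] FF(2) that yd pderiv_eq[OF ycoord_has_derivative, of i x] by simp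
  have "pderiv_dir i (pderiv_dir i (\<lambda>q. F q + ycoord q)) p = pderiv_dir i (\<lambda>x. pderiv_dir i F x + ycoord i) p"
    by (rule pderiv_cong[OF open_Xspace p e1])
  also have "\<dots> = pderiv_dir i (pderiv_dir i F) p + pderiv_dir i (\<lambda>_. ycoord i) p"
    by (rule pderiv_add) (use FF(3) p in auto)
  also have "\<dots> = pderiv_dir i (pderiv_dir i F) p" by (simp add: pderiv_const)
  finally show "pderiv_dir i (pderiv_dir i (\<lambda>q. F q + ycoord q)) p = pderiv_dir i (pderiv_dir i F) p" .
qed

lemma cont_P: "continuous_on S (\<lambda>p. (cmod (poly P (zcoord p)))\<^sup>2)"
  unfolding zcoord_def Complex_eq by (intro continuous_intros)

lemma fC_nonneg: "C > 0 \<Longrightarrow> y > 0 \<Longrightarrow> 0 \<le> fC C y"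
proof -
  assume C: "C > 0" and y: "y > 0"
  show ?thesis
  proof (cases "y \<le> C")
    case False
    have "ln (y / C) \<le> y / C - 1" using y C by (intro ln_le_minus_one) simp
    then have "C * ln (y / C) \<le> C * (y / C - 1)" using C by (intro mult_left_mono) auto
    also have "\<dots> = y - C" using C by (simp add: field_simps)
    finally show ?thesis using False by (simp add: fC_def)
  qed (simp add: fC_def)
qed

lemma fC_le: "C > 0 \<Longrightarrow> y > 0 \<Longrightarrow> fC C y \<le> y"
proof -
  assume C: "C > 0" and y: "y > 0"
  show ?thesis
  proof (cases "y \<le> C")
    case False
    then have "ln (y / C) > 0" using C by simp
    then have "C * ln (y / C) \<ge> 0" using C by simp
    moreover have "fC C y = y - C * ln (y / C) - C" using False by (simp add: fC_def)
    ultimately show ?thesis using C by linarith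
  qed (use y in \<open>simp add: fC_def\<close>)
qed

lemma set_int_real: "set_lebesgue_integral lborel Xspace f = (LINT p|lborel. indicator Xspace p * f p)"
  for f :: "real \<times> real \<times> real \<Rightarrow> real"
  unfolding set_lebesgue_integral_def by simp

lemma test_fun_facts:
  assumes "test_fun v"
  obtains K where "compact K" "K \<subseteq> Xspace" "\<And>p. p \<notin> K \<Longrightarrow> v p = 0" "Ck_on 2 UNIV v" "\<And>p. v p \<ge> 0"
  using assms unfolding test_fun_def smooth_on_def by blast

theorem mainTheorem1:
  fixes P :: "complex poly" and u0 :: "real \<times> real \<times> real \<Rightarrow> real"
    and R0 K :: real
  assumes P_nz: "P \<noteq> 0"
    and u0_smooth: "smooth_on Xspace u0"
    and u0_sol: "\<forall>p\<in>Xspace. Lap u0 p + exp (-2 * u0 p) * (cmod (poly P (zcoord p)))\<^sup>2 = 0"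
    and u0_bdd: "bdd_above ((\<lambda>p. ycoord p * exp (- u0 p) * cmod (poly P (zcoord p))) ` Xspace)"
    and R0_pos: "R0 > 0" and K_pos: "K > 0"
    and u0_asym: "\<forall>p\<in>Xspace. Rad p \<ge> R0 \<longrightarrow>
        \<bar>u0 p - real (degree P) * ln (Rad p) - ln (ycoord p)\<bar> \<le> K"
  shows "smooth_on Xspace (\<lambda>p. u0 p + ycoord p)
      \<and> (\<forall>p\<in>Xspace. Lap (\<lambda>q. u0 q + ycoord q) p
            + exp (-2 * (u0 p + ycoord p)) * (cmod (poly P (zcoord p)))\<^sup>2 \<le> 0)
      \<and> weak_supersol P (\<lambda>p. u0 p + ycoord p)
      \<and> (\<forall>C::real. C \<ge> max 1 (SUP p\<in>Xspace. (ycoord p)\<^sup>2 * exp (-2 * u0 p) * (cmod (poly P (zcoord p)))\<^sup>2) \<longrightarrow>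
           weak_subsol P (\<lambda>p. u0 p + fC C (ycoord p))
           \<and> (\<forall>p\<in>Xspace. u0 p \<le> u0 p + fC C (ycoord p)
                \<and> u0 p + fC C (ycoord p) \<le> u0 p + ycoord p))"
proof -
  let ?Q = "\<lambda>p. (cmod (poly P (zcoord p)))\<^sup>2"
  have U2: "Ck_on 2 Xspace u0" using u0_smooth unfolding smooth_on_def by blast
  have b1: "(1::real,0::real,0::real) \<in> Basis" unfolding Basis3 by simp
  have cu0: "continuous_on Xspace u0" using Ck2_facts(1)[OF U2 b1] .
  have sm: "smooth_on Xspace (\<lambda>p. u0 p + ycoord p)"
    unfolding smooth_on_def using Ck_add[OF open_Xspace] u0_smooth Ck_ycoord
    unfolding smooth_on_def by blast
  have W2: "Ck_on 2 Xspace (\<lambda>p. u0 p + ycoord p)" using sm unfolding smooth_on_def by blast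
  have cw: "continuous_on Xspace (\<lambda>p. u0 p + ycoord p)" using Ck2_facts(1)[OF W2 b1] .
  have Lapu0: "Lap u0 p = - exp (-2 * u0 p) * ?Q p" if "p \<in> Xspace" for p
    using u0_sol that by (simp add: algebra_simps eq_neg_iff_add_eq_0)
  have cls: "Lap (\<lambda>q. u0 q + ycoord q) p + exp (-2 * (u0 p + ycoord p)) * ?Q p \<le> 0" if p: "p \<in> Xspace" for p
  proof -
    have y: "ycoord p > 0" using p unfolding Xspace_def by simp
    have "exp (-2 * (u0 p + ycoord p)) \<le> exp (-2 * u0 p)" using y by simp
    then have "exp (-2 * (u0 p + ycoord p)) * ?Q p \<le> exp (-2 * u0 p) * ?Q p"
      by (rule mult_right_mono) simp
    then show ?thesis using Lap_add_y[OF U2 p] Lapu0[OF p] by simp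
  qed
  have super: "weak_supersol P (\<lambda>p. u0 p + ycoord p)"
    unfolding weak_supersol_def
  proof (intro conjI cw allI impI)
    fix v assume tv: "test_fun v"
    then obtain Kc where K: "compact Kc" "Kc \<subseteq> Xspace" and vz: "\<And>p. p \<notin> Kc \<Longrightarrow> v p = 0"
      and V: "Ck_on 2 UNIV v" and vp: "\<And>p. v p \<ge> 0" using test_fun_facts[OF tv] by blast
    have G: "continuous_on Xspace (\<lambda>p. exp (-2 * (u0 p + ycoord p)) * ?Q p)"
      by (intro continuous_intros cw cont_P)
    note WI = weak_identity[OF K vz V W2 G]
    have "0 \<le> (LINT p|lborel. indicator Xspace p * ((- Lap (\<lambda>q. u0 q + ycoord q) p - exp (-2 * (u0 p + ycoord p)) * ?Q p) * v p))"
    proof (rule Bochner_Integration.integral_nonneg)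
      fix p
      show "0 \<le> indicator Xspace p * ((- Lap (\<lambda>q. u0 q + ycoord q) p - exp (-2 * (u0 p + ycoord p)) * ?Q p) * v p)"
      proof (cases "p \<in> Xspace")
        case True
        then show ?thesis using cls[OF True] vp[of p] by simp
      qed simp
    qed
    then show "0 \<le> set_lebesgue_integral lborel Xspace
        (\<lambda>p. - (u0 p + ycoord p) * Lap v p - exp (-2 * (u0 p + ycoord p)) * ?Q p * v p)"
      unfolding set_int_real using WI(1) by simp
  qed
  obtain M where M: "\<And>p. p \<in> Xspace \<Longrightarrow> ycoord p * exp (- u0 p) * cmod (poly P (zcoord p)) \<le> M"
    using u0_bdd unfolding bdd_above_def by blast
  have sqeq: "(ycoord p)\<^sup>2 * exp (-2 * u0 p) * ?Q p = (ycoord p * exp (- u0 p) * cmod (poly P (zcoord p)))\<^sup>2" for p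
  proof -
    have "exp (-2 * u0 p) = (exp (- u0 p))\<^sup>2" by (simp add: power2_eq_square exp_add[symmetric])
    then show ?thesis by (simp add: power_mult_distrib)
  qed
  have bdd2: "bdd_above ((\<lambda>p. (ycoord p)\<^sup>2 * exp (-2 * u0 p) * ?Q p) ` Xspace)"
    unfolding bdd_above_def
  proof (intro exI ballI)
    fix r assume "r \<in> (\<lambda>p. (ycoord p)\<^sup>2 * exp (-2 * u0 p) * ?Q p) ` Xspace"
    then obtain p where p: "p \<in> Xspace" and r: "r = (ycoord p)\<^sup>2 * exp (-2 * u0 p) * ?Q p" by blast
    have y: "ycoord p > 0" using p unfolding Xspace_def by simp
    have nn: "0 \<le> ycoord p * exp (- u0 p) * cmod (poly P (zcoord p))" using y by simp
    have "(ycoord p * exp (- u0 p) * cmod (poly P (zcoord p)))\<^sup>2 \<le> M\<^sup>2"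
      using power_mono[OF M[OF p] nn, of 2] .
    then show "r \<le> M\<^sup>2" unfolding r sqeq .
  qed
  have sub: "weak_subsol P (\<lambda>p. u0 p + fC C (ycoord p)) \<and> (\<forall>p\<in>Xspace. u0 p \<le> u0 p + fC C (ycoord p)
                \<and> u0 p + fC C (ycoord p) \<le> u0 p + ycoord p)"
    if CC: "C \<ge> max 1 (SUP p\<in>Xspace. (ycoord p)\<^sup>2 * exp (-2 * u0 p) * ?Q p)" for C
  proof -
    have C: "C > 0" using CC by simp
    have K0: "(ycoord p)\<^sup>2 * exp (-2 * u0 p) * ?Q p \<le> C" if "p \<in> Xspace" for p
      using cSUP_upper[OF that bdd2] CC by simp
    have ineq: "\<forall>p\<in>Xspace. u0 p \<le> u0 p + fC C (ycoord p) \<and> u0 p + fC C (ycoord p) \<le> u0 p + ycoord p"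
    proof
      fix p assume "p \<in> Xspace"
      then have y: "ycoord p > 0" unfolding Xspace_def by simp
      show "u0 p \<le> u0 p + fC C (ycoord p) \<and> u0 p + fC C (ycoord p) \<le> u0 p + ycoord p"
        using fC_nonneg[OF C y] fC_le[OF C y] by simp
    qed
    have cw: "continuous_on Xspace (\<lambda>p. u0 p + fC C (ycoord p))"
      by (intro continuous_intros cu0 cont_fC[OF C])
    have wsub: "weak_subsol P (\<lambda>p. u0 p + fC C (ycoord p))"
      unfolding weak_subsol_def
    proof (intro conjI cw allI impI)
      fix v assume tv: "test_fun v"
      then obtain Kc where K: "compact Kc" "Kc \<subseteq> Xspace" and vz: "\<And>p. p \<notin> Kc \<Longrightarrow> v p = 0"
        and V: "Ck_on 2 UNIV v" and vp: "\<And>p. v p \<ge> 0" using test_fun_facts[OF tv] by blast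
      let ?G = "\<lambda>p. exp (-2 * (u0 p + fC C (ycoord p))) * ?Q p"
      have G: "continuous_on Xspace ?G"
        by (intro continuous_intros cw cont_P)
      note WI = weak_identity[OF K vz V U2 G]
      have b: "(1::real,0::real,0::real) \<in> Basis" "(0::real,1::real,0::real) \<in> Basis" "(0::real,0::real,1::real) \<in> Basis"
        unfolding Basis3 by simp_all
      have y0: "ycoord (1::real,0::real,0::real) = 0" "ycoord (0::real,1::real,0::real) = 0" by (simp_all add: ycoord_def)
      note F1' = IBP_fC12[of C Kc v, OF C K vz V b(1) y0(1)] and F2' = IBP_fC12[of C Kc v, OF C K vz V b(2) y0(2)]
        and F3 = IBP_fC3[of C Kc v, OF C K vz V]
      let ?A = "\<lambda>p. indicator Xspace p * (- u0 p * Lap v p - ?G p * v p)"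
      let ?f1 = "\<lambda>p. indicator Xspace p * (fC C (ycoord p) * pderiv_dir (1,0,0) (pderiv_dir (1,0,0) v) p)"
      let ?f2 = "\<lambda>p. indicator Xspace p * (fC C (ycoord p) * pderiv_dir (0,1,0) (pderiv_dir (0,1,0) v) p)"
      let ?f3 = "\<lambda>p. indicator Xspace p * (fC C (ycoord p) * pderiv_dir (0,0,1) (pderiv_dir (0,0,1) v) p)"
      let ?B = "\<lambda>p. indicator Xspace p * ((- Lap u0 p - ?G p) * v p)"
      let ?g = "\<lambda>p. indicator Xspace p * (gC C (ycoord p) * v p)"
      have eq: "(\<lambda>p. indicator Xspace p * (- (u0 p + fC C (ycoord p)) * Lap v p - ?G p * v p))
          = (\<lambda>p. ?A p - ?f1 p - ?f2 p - ?f3 p)"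
        by (simp add: fun_eq_iff Lap3 algebra_simps)
      have i1: "integrable lborel (\<lambda>p. ?A p - ?f1 p)" using WI(2) F1'(2) by simp
      have i2: "integrable lborel (\<lambda>p. ?A p - ?f1 p - ?f2 p)" using i1 F2'(2) by simp
      have "(LINT p|lborel. ?A p - ?f1 p - ?f2 p - ?f3 p)
          = (LINT p|lborel. ?A p - ?f1 p - ?f2 p) - (LINT p|lborel. ?f3 p)"
        by (rule Bochner_Integration.integral_diff[OF i2 F3(2)])
      also have "(LINT p|lborel. ?A p - ?f1 p - ?f2 p) = (LINT p|lborel. ?A p - ?f1 p) - (LINT p|lborel. ?f2 p)"
        by (rule Bochner_Integration.integral_diff[OF i1 F2'(2)])
      also have "(LINT p|lborel. ?A p - ?f1 p) = (LINT p|lborel. ?A p) - (LINT p|lborel. ?f1 p)"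
        by (rule Bochner_Integration.integral_diff[OF WI(2) F1'(2)])
      finally have "(LINT p|lborel. ?A p - ?f1 p - ?f2 p - ?f3 p) = (LINT p|lborel. ?B p) - (LINT p|lborel. ?g p)"
        using WI(1) F1'(1) F2'(1) F3(1) by simp
      also have "\<dots> = (LINT p|lborel. ?B p - ?g p)"
        by (rule Bochner_Integration.integral_diff[OF WI(3) F3(3), symmetric])
      also have "\<dots> \<le> 0"
      proof -
        have "0 \<le> (LINT p|lborel. - (?B p - ?g p))"
        proof (rule Bochner_Integration.integral_nonneg)
          fix p
          show "0 \<le> - (?B p - ?g p)"
          proof (cases "p \<in> Xspace")
            case True
            then have y: "ycoord p > 0" unfolding Xspace_def by simp
            have Qn: "0 \<le> exp (-2 * u0 p) * ?Q p" by simp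
            have key: "exp (-2 * u0 p) * ?Q p - gC C (ycoord p) - ?G p \<le> 0"
            proof (cases "ycoord p < C")
              case True
              then show ?thesis by (simp add: gC_def fC_zero)
            next
              case False
              have e1: "exp (-2 * (u0 p + fC C (ycoord p))) * ?Q p \<ge> 0" by simp
              have "(ycoord p)\<^sup>2 * (exp (-2 * u0 p) * ?Q p) \<le> C" using K0[OF True] by (simp add: mult.assoc)
              then have le: "exp (-2 * u0 p) * ?Q p \<le> C / (ycoord p)\<^sup>2"
                using y by (simp add: field_simps)
              have gq: "gC C (ycoord p) = C / (ycoord p)\<^sup>2" using False by (simp add: gC_def)
              show ?thesis using e1 le gq by linarith
            qed
            have "- (?B p - ?g p) = - ((exp (-2 * u0 p) * ?Q p - gC C (ycoord p) - ?G p) * v p)"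
              using True Lapu0[OF True] by (simp add: algebra_simps)
            also have "\<dots> \<ge> 0" using key vp[of p] by (simp add: mult_nonpos_nonneg)
            finally show ?thesis .
          qed simp
        qed
        moreover have "(LINT p|lborel. - (?B p - ?g p)) = - (LINT p|lborel. ?B p - ?g p)"
          by (rule Bochner_Integration.integral_minus)
        ultimately show ?thesis by linarith
      qed
      finally show "set_lebesgue_integral lborel Xspace
          (\<lambda>p. - (u0 p + fC C (ycoord p)) * Lap v p - exp (-2 * (u0 p + fC C (ycoord p))) * ?Q p * v p) \<le> 0"
        unfolding set_int_real eq .
    qed
    show ?thesis using wsub ineq by blast
  qed
  show ?thesis using sm cls super sub by blast
qed

end
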